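(* No free adequate semigroup or free adequate monoid on a non-empty set is finitely generated as a semigroup or monoid (i.e. using multiplication only).
   Context: For a semigroup $S$ let $S^1=S$ if $S$ is a monoid and otherwise $S$ with an identity adjoined. $a\,\mathcal{L}^*\,b$ iff for all $x,y\in S^1$: $ax=ay\Leftrightarrow bx=by$; $a\,\mathcal{R}^*\,b$ iff for all $x,y\in S^1$: $xa=ya\Leftrightarrow xb=yb$. $S$ is adequate if its idempotents commute and every $\mathcal{L}^*$-class and every $\mathcal{R}^*$-class contains an idempotent (necessarily unique); $x^+$ is the idempotent $\mathcal{R}^*$-related to $x$, $x^*$ the idempotent $\mathcal{L}^*$-related to $x$. Adequate semigroups [monoids] are viewed as $(2,1,1)$-algebras [$(2,1,1,0)$-algebras], morphisms preserving all operations. The free adequate semigroup [monoid] on a set $\Sigma$ is an adequate semigroup [monoid] containing $\Sigma$ such that every map from $\Sigma$ to an adequate semigroup [monoid] extends uniquely to a morphism. *)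

theory Defs
  imports Main
begin

text \<open>S^1 is modelled by the option type: None is the adjoined identity.
  (If S is already a monoid, adjoining a formal identity does not change
  the relations L* and R*, since multiplying by it behaves like the identity.)\<close>

fun ract :: "('a \<Rightarrow> 'a \<Rightarrow> 'a) \<Rightarrow> 'a \<Rightarrow> 'a option \<Rightarrow> 'a" where
  "ract m a None = a"
| "ract m a (Some x) = m a x"

fun lact :: "('a \<Rightarrow> 'a \<Rightarrow> 'a) \<Rightarrow> 'a option \<Rightarrow> 'a \<Rightarrow> 'a" where
  "lact m None a = a"
| "lact m (Some x) a = m x a"

definition one_adj :: "'a set \<Rightarrow> 'a option set" where
  "one_adj S = insert None (Some ` S)"

definition Lstar :: "'a set \<Rightarrow> ('a \<Rightarrow> 'a \<Rightarrow> 'a) \<Rightarrow> 'a \<Rightarrow> 'a \<Rightarrow> bool" where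
  "Lstar S m a b \<longleftrightarrow> (\<forall>x\<in>one_adj S. \<forall>y\<in>one_adj S.
      (ract m a x = ract m a y) \<longleftrightarrow> (ract m b x = ract m b y))"

definition Rstar :: "'a set \<Rightarrow> ('a \<Rightarrow> 'a \<Rightarrow> 'a) \<Rightarrow> 'a \<Rightarrow> 'a \<Rightarrow> bool" where
  "Rstar S m a b \<longleftrightarrow> (\<forall>x\<in>one_adj S. \<forall>y\<in>one_adj S.
      (lact m x a = lact m y a) \<longleftrightarrow> (lact m x b = lact m y b))"

text \<open>Adequate semigroup viewed as a (2,1,1)-algebra (S, mult, +, * ):
  idempotents commute, a+ is the idempotent R*-related to a,
  a* the idempotent L*-related to a.\<close>

definition adequate_semigroup ::
  "'a set \<Rightarrow> ('a \<Rightarrow> 'a \<Rightarrow> 'a) \<Rightarrow> ('a \<Rightarrow> 'a) \<Rightarrow> ('a \<Rightarrow> 'a) \<Rightarrow> bool" where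
  "adequate_semigroup S m p st \<longleftrightarrow>
     (\<forall>a\<in>S. \<forall>b\<in>S. m a b \<in> S) \<and>
     (\<forall>a\<in>S. \<forall>b\<in>S. \<forall>c\<in>S. m (m a b) c = m a (m b c)) \<and>
     (\<forall>e\<in>S. \<forall>f\<in>S. m e e = e \<and> m f f = f \<longrightarrow> m e f = m f e) \<and>
     (\<forall>a\<in>S. p a \<in> S \<and> m (p a) (p a) = p a \<and> Rstar S m a (p a)) \<and>
     (\<forall>a\<in>S. st a \<in> S \<and> m (st a) (st a) = st a \<and> Lstar S m a (st a))"

definition adequate_monoid ::
  "'a set \<Rightarrow> ('a \<Rightarrow> 'a \<Rightarrow> 'a) \<Rightarrow> ('a \<Rightarrow> 'a) \<Rightarrow> ('a \<Rightarrow> 'a) \<Rightarrow> 'a \<Rightarrow> bool" where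
  "adequate_monoid S m p st e \<longleftrightarrow>
     adequate_semigroup S m p st \<and> e \<in> S \<and> (\<forall>a\<in>S. m e a = a \<and> m a e = a)"

definition adequate_hom ::
  "'a set \<Rightarrow> ('a \<Rightarrow> 'a \<Rightarrow> 'a) \<Rightarrow> ('a \<Rightarrow> 'a) \<Rightarrow> ('a \<Rightarrow> 'a) \<Rightarrow>
   'b set \<Rightarrow> ('b \<Rightarrow> 'b \<Rightarrow> 'b) \<Rightarrow> ('b \<Rightarrow> 'b) \<Rightarrow> ('b \<Rightarrow> 'b) \<Rightarrow> ('a \<Rightarrow> 'b) \<Rightarrow> bool" where
  "adequate_hom S m p st T m' p' st' h \<longleftrightarrow>
     (\<forall>a\<in>S. h a \<in> T) \<and>
     (\<forall>a\<in>S. \<forall>b\<in>S. h (m a b) = m' (h a) (h b)) \<and>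
     (\<forall>a\<in>S. h (p a) = p' (h a)) \<and>
     (\<forall>a\<in>S. h (st a) = st' (h a))"

definition adequate_monoid_hom ::
  "'a set \<Rightarrow> ('a \<Rightarrow> 'a \<Rightarrow> 'a) \<Rightarrow> ('a \<Rightarrow> 'a) \<Rightarrow> ('a \<Rightarrow> 'a) \<Rightarrow> 'a \<Rightarrow>
   'b set \<Rightarrow> ('b \<Rightarrow> 'b \<Rightarrow> 'b) \<Rightarrow> ('b \<Rightarrow> 'b) \<Rightarrow> ('b \<Rightarrow> 'b) \<Rightarrow> 'b \<Rightarrow> ('a \<Rightarrow> 'b) \<Rightarrow> bool" where
  "adequate_monoid_hom S m p st e T m' p' st' e' h \<longleftrightarrow>
     adequate_hom S m p st T m' p' st' h \<and> h e = e'"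

text \<open>HOL cannot quantify over types inside a formula, so the target algebras
  range over all adequate semigroups (monoids) whose carrier lies in the type
  'a list; this type is infinite and at least as large as 'a, hence large
  enough to contain an isomorphic copy of the genuine free object on \<Sigma>
  (of cardinality max(|\<Sigma>|, aleph_0)) and of S itself, so the property
  characterises S up to isomorphism exactly as the unrestricted one.\<close>

definition free_adequate_semigroup ::
  "'a set \<Rightarrow> 'a set \<Rightarrow> ('a \<Rightarrow> 'a \<Rightarrow> 'a) \<Rightarrow> ('a \<Rightarrow> 'a) \<Rightarrow> ('a \<Rightarrow> 'a) \<Rightarrow> bool" where
  "free_adequate_semigroup \<Sigma> S m p st \<longleftrightarrow>
     adequate_semigroup S m p st \<and> \<Sigma> \<subseteq> S \<and>
     (\<forall>(T :: 'a list set) m' p' st'. adequate_semigroup T m' p' st' \<longrightarrow>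
        (\<forall>f. f ` \<Sigma> \<subseteq> T \<longrightarrow>
           (\<exists>h. adequate_hom S m p st T m' p' st' h \<and> (\<forall>x\<in>\<Sigma>. h x = f x)) \<and>
           (\<forall>h1 h2. adequate_hom S m p st T m' p' st' h1 \<and> (\<forall>x\<in>\<Sigma>. h1 x = f x) \<and>
                    adequate_hom S m p st T m' p' st' h2 \<and> (\<forall>x\<in>\<Sigma>. h2 x = f x)
                    \<longrightarrow> (\<forall>a\<in>S. h1 a = h2 a))))"

definition free_adequate_monoid ::
  "'a set \<Rightarrow> 'a set \<Rightarrow> ('a \<Rightarrow> 'a \<Rightarrow> 'a) \<Rightarrow> ('a \<Rightarrow> 'a) \<Rightarrow> ('a \<Rightarrow> 'a) \<Rightarrow> 'a \<Rightarrow> bool" where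
  "free_adequate_monoid \<Sigma> S m p st e \<longleftrightarrow>
     adequate_monoid S m p st e \<and> \<Sigma> \<subseteq> S \<and>
     (\<forall>(T :: 'a list set) m' p' st' e'. adequate_monoid T m' p' st' e' \<longrightarrow>
        (\<forall>f. f ` \<Sigma> \<subseteq> T \<longrightarrow>
           (\<exists>h. adequate_monoid_hom S m p st e T m' p' st' e' h \<and> (\<forall>x\<in>\<Sigma>. h x = f x)) \<and>
           (\<forall>h1 h2. adequate_monoid_hom S m p st e T m' p' st' e' h1 \<and> (\<forall>x\<in>\<Sigma>. h1 x = f x) \<and>
                    adequate_monoid_hom S m p st e T m' p' st' e' h2 \<and> (\<forall>x\<in>\<Sigma>. h2 x = f x)
                    \<longrightarrow> (\<forall>a\<in>S. h1 a = h2 a))))"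

inductive_set sg_gen :: "('a \<Rightarrow> 'a \<Rightarrow> 'a) \<Rightarrow> 'a set \<Rightarrow> 'a set" for m X where
  base: "x \<in> X \<Longrightarrow> x \<in> sg_gen m X"
| mult: "a \<in> sg_gen m X \<Longrightarrow> b \<in> sg_gen m X \<Longrightarrow> m a b \<in> sg_gen m X"

inductive_set mon_gen :: "('a \<Rightarrow> 'a \<Rightarrow> 'a) \<Rightarrow> 'a \<Rightarrow> 'a set \<Rightarrow> 'a set" for m e X where
  base: "x \<in> X \<Longrightarrow> x \<in> mon_gen m e X"
| unit: "e \<in> mon_gen m e X"
| mult: "a \<in> mon_gen m e X \<Longrightarrow> b \<in> mon_gen m e X \<Longrightarrow> m a b \<in> mon_gen m e X"

definition fg_semigroup :: "'a set \<Rightarrow> ('a \<Rightarrow> 'a \<Rightarrow> 'a) \<Rightarrow> bool" where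
  "fg_semigroup S m \<longleftrightarrow> (\<exists>X. finite X \<and> X \<subseteq> S \<and> sg_gen m X = S)"

definition fg_monoid :: "'a set \<Rightarrow> ('a \<Rightarrow> 'a \<Rightarrow> 'a) \<Rightarrow> 'a \<Rightarrow> bool" where
  "fg_monoid S m e \<longleftrightarrow> (\<exists>X. finite X \<and> X \<subseteq> S \<and> mon_gen m e X = S)"

end

theory Submission imports Defs "HOL-Library.Nat_Bijection" begin

definition PP :: "(nat\<times>nat) set" where "PP = {q. snd q \<le> fst q}"
fun mP :: "nat\<times>nat \<Rightarrow> nat\<times>nat \<Rightarrow> nat\<times>nat" where
  "mP (j1,k1) (j2,k2) = (max j1 (k1+j2), k1+k2)"
fun pP :: "nat\<times>nat \<Rightarrow> nat\<times>nat" where "pP (j,k) = (j,0)"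
fun sP :: "nat\<times>nat \<Rightarrow> nat\<times>nat" where "sP (j,k) = (j-k,0)"

lemma ball_one_adj: "(\<forall>x\<in>one_adj S. P x) \<longleftrightarrow> P None \<and> (\<forall>s\<in>S. P (Some s))"
  by (auto simp: one_adj_def)

lemma P_adequate: "adequate_monoid PP mP pP sP (0,0)"
proof -
  have R: "Rstar PP mP a (pP a)" if "a \<in> PP" for a
    using that unfolding Rstar_def ball_one_adj PP_def
    by (cases a) (auto simp: split_paired_all)
  have L: "Lstar PP mP a (sP a)" if "a \<in> PP" for a
    using that unfolding Lstar_def ball_one_adj PP_def
    by (cases a) (auto simp: split_paired_all)
  show ?thesis unfolding adequate_monoid_def adequate_semigroup_def
    using R L by (auto simp: PP_def split_paired_all)
qed


locale transp =
  fixes A :: "'b set" and g :: "'b \<Rightarrow> 'c" and d :: "'c \<Rightarrow> 'b"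
  assumes dg: "\<And>x. x \<in> A \<Longrightarrow> d (g x) = x"
begin

definition "mT m x y = g (m (d x) (d y))"
definition "uT p x = g (p (d x))"

lemma g_inj: "x \<in> A \<Longrightarrow> y \<in> A \<Longrightarrow> g x = g y \<longleftrightarrow> x = y"
  by (metis dg)

lemma mT_g[simp]: "x \<in> A \<Longrightarrow> y \<in> A \<Longrightarrow> mT m (g x) (g y) = g (m x y)"
  by (simp add: mT_def dg)
lemma uT_g[simp]: "x \<in> A \<Longrightarrow> uT p (g x) = g (p x)"
  by (simp add: uT_def dg)

lemma ball_img: "(\<forall>x\<in>g ` A. P x) \<longleftrightarrow> (\<forall>x\<in>A. P (g x))" by auto

lemma transp_R:
  assumes cl: "\<forall>a\<in>A. \<forall>b\<in>A. m a b \<in> A" and a: "a \<in> A" and b: "b \<in> A"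
    and R: "Rstar A m a b"
  shows "Rstar (g ` A) (mT m) (g a) (g b)"
  using R a b cl unfolding Rstar_def ball_one_adj ball_img
  by (simp add: g_inj)

lemma transp_L:
  assumes cl: "\<forall>a\<in>A. \<forall>b\<in>A. m a b \<in> A" and a: "a \<in> A" and b: "b \<in> A"
    and R: "Lstar A m a b"
  shows "Lstar (g ` A) (mT m) (g a) (g b)"
  using R a b cl unfolding Lstar_def ball_one_adj ball_img
  by (simp add: g_inj)

lemma transp_adequate:
  assumes "adequate_monoid A m p st e"
  shows "adequate_monoid (g ` A) (mT m) (uT p) (uT st) (g e)"
proof -
  have cl: "\<forall>a\<in>A. \<forall>b\<in>A. m a b \<in> A" using assms
    by (simp add: adequate_monoid_def adequate_semigroup_def)
  show ?thesis using assms transp_R[OF cl] transp_L[OF cl]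
    unfolding adequate_monoid_def adequate_semigroup_def ball_img
    by (simp add: g_inj)
qed
end


definition gg :: "'a \<Rightarrow> nat \<times> nat \<Rightarrow> 'a list" where
  "gg c q = replicate (prod_encode q) c"
definition dd :: "'a list \<Rightarrow> nat \<times> nat" where
  "dd l = prod_decode (length l)"

lemma dd_gg[simp]: "dd (gg c q) = q" by (simp add: gg_def dd_def)

interpretation TP: transp PP "gg c" dd for c by unfold_locales simp

lemma PP_mP: "q1 \<in> PP \<Longrightarrow> q2 \<in> PP \<Longrightarrow> mP q1 q2 \<in> PP"
  by (cases q1; cases q2) (auto simp: PP_def)

lemma hom_img:
  assumes "u \<in> gg c ` PP"
  shows "dd u \<in> PP \<and> u = gg c (dd u)"
  using assms by auto

lemma h_mult:
  assumes "h a \<in> gg c ` PP" "h b \<in> gg c ` PP"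
  shows "dd (TP.mT c mP (h a) (h b)) = mP (dd (h a)) (dd (h b))"
  using hom_img[OF assms(1)] hom_img[OF assms(2)]
  by (metis TP.mT_g dd_gg)

lemma sg_bound:
  assumes hS: "\<forall>a\<in>S. h a \<in> gg c ` PP"
    and hm: "\<forall>a\<in>S. \<forall>b\<in>S. h (m a b) = TP.mT c mP (h a) (h b)"
    and cl: "\<forall>a\<in>S. \<forall>b\<in>S. m a b \<in> S"
    and Y: "Y \<subseteq> S" and N: "\<forall>y\<in>Y. snd (dd (h y)) = 0 \<longrightarrow> fst (dd (h y)) \<le> N"
    and z: "z \<in> sg_gen m Y"
  shows "z \<in> S \<and> (snd (dd (h z)) = 0 \<longrightarrow> fst (dd (h z)) \<le> N)"
  using z
proof induction
  case (base x) then show ?case using Y N by auto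
next
  case (mult a b)
  have e: "dd (h (m a b)) = mP (dd (h a)) (dd (h b))"
    using mult hm hS h_mult by metis
  show ?case using mult cl e
    by (cases "dd (h a)"; cases "dd (h b)") auto
qed

lemma mon_bound:
  assumes hS: "\<forall>a\<in>S. h a \<in> gg c ` PP"
    and hm: "\<forall>a\<in>S. \<forall>b\<in>S. h (m a b) = TP.mT c mP (h a) (h b)"
    and cl: "\<forall>a\<in>S. \<forall>b\<in>S. m a b \<in> S"
    and Y: "Y \<subseteq> S" and N: "\<forall>y\<in>Y. snd (dd (h y)) = 0 \<longrightarrow> fst (dd (h y)) \<le> N"
    and eS: "e \<in> S" and he: "h e = gg c (0,0)"
    and z: "z \<in> mon_gen m e Y"
  shows "z \<in> S \<and> (snd (dd (h z)) = 0 \<longrightarrow> fst (dd (h z)) \<le> N)"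
  using z
proof induction
  case (base x) then show ?case using Y N by auto
next
  case unit then show ?case using eS he by simp
next
  case (mult a b)
  have e: "dd (h (m a b)) = mP (dd (h a)) (dd (h b))"
    using mult hm hS h_mult by metis
  show ?case using mult cl e
    by (cases "dd (h a)"; cases "dd (h b)") auto
qed

primrec pw :: "('b \<Rightarrow> 'b \<Rightarrow> 'b) \<Rightarrow> 'b \<Rightarrow> nat \<Rightarrow> 'b" where
  "pw m x 0 = x"
| "pw m x (Suc n) = m (pw m x n) x"

lemma pw_h:
  assumes hm: "\<forall>a\<in>S. \<forall>b\<in>S. h (m a b) = TP.mT c mP (h a) (h b)"
    and cl: "\<forall>a\<in>S. \<forall>b\<in>S. m a b \<in> S"
    and x: "x \<in> S" and hx: "h x = gg c (1,1)"
  shows "pw m x n \<in> S \<and> h (pw m x n) = gg c (Suc n, Suc n)"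
proof (induction n)
  case 0 then show ?case using x hx by simp
next
  case (Suc n)
  have "(Suc n, Suc n) \<in> PP" "(1,1) \<in> PP" by (auto simp: PP_def)
  then show ?case using Suc cl hm x hx by simp
qed

lemma finite_bound: "finite Y \<Longrightarrow> \<exists>N. \<forall>y\<in>Y. fst (f y) \<le> (N::nat)"
  by (rule exI[of _ "Max ((fst \<circ> f) ` Y)"]) auto

theorem theorem7p3:
  fixes \<Sigma> :: "'a set"
  assumes "\<Sigma> \<noteq> {}"
  shows "(\<forall>S m p st. free_adequate_semigroup \<Sigma> S m p st \<longrightarrow> \<not> fg_semigroup S m)
       \<and> (\<forall>M m p st e. free_adequate_monoid \<Sigma> M m p st e \<longrightarrow> \<not> fg_monoid M m e)"
proof -
  obtain c where c: "c \<in> \<Sigma>" using assms by auto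
  let ?T = "gg c ` PP"
  have adT: "adequate_monoid ?T (TP.mT c mP) (TP.uT c pP) (TP.uT c sP) (gg c (0,0))"
    by (rule TP.transp_adequate[OF P_adequate])
  hence adS: "adequate_semigroup ?T (TP.mT c mP) (TP.uT c pP) (TP.uT c sP)"
    by (simp add: adequate_monoid_def)
  have in11: "gg c (1,1) \<in> ?T" by (auto simp: PP_def)
  have f: "(\<lambda>_. gg c (1,1)) ` \<Sigma> \<subseteq> ?T" using in11 by auto
  have pp: "TP.uT c pP (gg c (Suc n, Suc n)) = gg c (Suc n, 0)" for n
    by (simp add: PP_def)
  show ?thesis
  proof (intro conjI allI impI notI)
    fix S m p st
    assume fr: "free_adequate_semigroup \<Sigma> S m p st" and fg: "fg_semigroup S m"
    from fr adS f obtain h where h: "adequate_hom S m p st ?T (TP.mT c mP) (TP.uT c pP) (TP.uT c sP) h"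
      and hx: "\<forall>x\<in>\<Sigma>. h x = gg c (1,1)"
      unfolding free_adequate_semigroup_def by blast
    from fg obtain X where X: "finite X" "X \<subseteq> S" "sg_gen m X = S" unfolding fg_semigroup_def by blast
    obtain N where N: "\<forall>y\<in>X. fst (dd (h y)) \<le> N" using finite_bound[OF X(1), of "\<lambda>y. dd (h y)"] by blast
    have cS: "c \<in> S" using fr c by (auto simp: free_adequate_semigroup_def)
    have ad: "adequate_semigroup S m p st" using fr by (simp add: free_adequate_semigroup_def)
    have cl: "\<forall>a\<in>S. \<forall>b\<in>S. m a b \<in> S" using ad by (simp add: adequate_semigroup_def)
    have hS: "\<forall>a\<in>S. h a \<in> ?T" and hm: "\<forall>a\<in>S. \<forall>b\<in>S. h (m a b) = TP.mT c mP (h a) (h b)"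
      and hp: "\<forall>a\<in>S. h (p a) = TP.uT c pP (h a)"
      using h by (auto simp: adequate_hom_def)
    have pwN: "pw m c N \<in> S \<and> h (pw m c N) = gg c (Suc N, Suc N)"
      by (rule pw_h[OF hm cl cS]) (use hx c in auto)
    let ?z = "p (pw m c N)"
    have zS: "?z \<in> S" using ad pwN by (simp add: adequate_semigroup_def)
    have hz: "dd (h ?z) = (Suc N, 0)" using hp pwN pp by simp
    have "snd (dd (h ?z)) = 0 \<longrightarrow> fst (dd (h ?z)) \<le> N"
      using sg_bound[OF hS hm cl X(2), of N ?z] N X(3) zS by auto
    then show False using hz by simp
  next
    fix S m p st e
    assume fr: "free_adequate_monoid \<Sigma> S m p st e" and fg: "fg_monoid S m e"
    from fr adT f obtain h where h: "adequate_monoid_hom S m p st e ?T (TP.mT c mP) (TP.uT c pP) (TP.uT c sP) (gg c (0,0)) h"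
      and hx: "\<forall>x\<in>\<Sigma>. h x = gg c (1,1)"
      unfolding free_adequate_monoid_def by blast
    from fg obtain X where X: "finite X" "X \<subseteq> S" "mon_gen m e X = S" unfolding fg_monoid_def by blast
    obtain N where N: "\<forall>y\<in>X. fst (dd (h y)) \<le> N" using finite_bound[OF X(1), of "\<lambda>y. dd (h y)"] by blast
    have cS: "c \<in> S" using fr c by (auto simp: free_adequate_monoid_def)
    have ad: "adequate_semigroup S m p st" and eS: "e \<in> S"
      using fr by (simp_all add: free_adequate_monoid_def adequate_monoid_def)
    have cl: "\<forall>a\<in>S. \<forall>b\<in>S. m a b \<in> S" using ad by (simp add: adequate_semigroup_def)
    have hS: "\<forall>a\<in>S. h a \<in> ?T" and hm: "\<forall>a\<in>S. \<forall>b\<in>S. h (m a b) = TP.mT c mP (h a) (h b)"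
      and hp: "\<forall>a\<in>S. h (p a) = TP.uT c pP (h a)" and he: "h e = gg c (0,0)"
      using h by (auto simp: adequate_monoid_hom_def adequate_hom_def)
    have pwN: "pw m c N \<in> S \<and> h (pw m c N) = gg c (Suc N, Suc N)"
      by (rule pw_h[OF hm cl cS]) (use hx c in auto)
    let ?z = "p (pw m c N)"
    have zS: "?z \<in> S" using ad pwN by (simp add: adequate_semigroup_def)
    have hz: "dd (h ?z) = (Suc N, 0)" using hp pwN pp by simp
    have "snd (dd (h ?z)) = 0 \<longrightarrow> fst (dd (h ?z)) \<le> N"
      using mon_bound[OF hS hm cl X(2), of N e, OF _ eS he, of ?z] N X(3) zS by auto
    then show False using hz by simp
  qed
qed

end
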